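(* Assume Condition $\mathcal A$. For any $\kappa_1\in(0,\kappa)$ there exist constants $\nu>0$, $c_*>0$ and $\varepsilon_0>0$ such that for all $\varepsilon\in(0,\varepsilon_0)$ $$\sup_{\vartheta\in\Theta}\mathbf P_\vartheta\left\{\sup_{0\le t\le T}|X_t-x_t(\vartheta)|>\varepsilon^{\kappa_1}\right\}\le e^{-c_*\varepsilon^{-\nu}}.$$
   Context: Under $\mathbf P_\vartheta$, $X_t$ solves $dX_t=S(\vartheta,X_t)\,dt+\varepsilon\,dW_t$, $X_0=x_0$, $0\le t\le T$, $W$ a standard Wiener process; $x_t(\vartheta)$ solves the ODE $\frac{dx_t}{dt}=S(\vartheta,x_t)$, $x_0$ given. Condition $\mathcal A$: $S(\vartheta,x)=a|x-\vartheta|^\kappa+h(x)$ with $\kappa\in(0,1/2)$, $a>0$; $h$ bounded with continuous bounded derivative $|h'|\le H_1$ and $h(x)\ge b>0$; $\vartheta\in\Theta=(\alpha,\beta)$, $\alpha>x_0$, $\beta<\inf_{\vartheta\in\Theta}x_T(\vartheta)$. *)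

theory Defs
  imports "HOL-Probability.Probability"
begin

definition standard_wiener :: "'a measure \<Rightarrow> (real \<Rightarrow> 'a \<Rightarrow> real) \<Rightarrow> bool" where
  "standard_wiener M W \<longleftrightarrow>
     prob_space M \<and>
     (\<forall>t\<ge>0. W t \<in> borel_measurable M) \<and>
     (\<forall>\<omega>\<in>space M. W 0 \<omega> = 0) \<and>
     (\<forall>\<omega>\<in>space M. continuous_on {0..} (\<lambda>t. W t \<omega>)) \<and>
     (\<forall>s t. 0 \<le> s \<and> s < t \<longrightarrow>
        distributed M lborel (\<lambda>\<omega>. W t \<omega> - W s \<omega>) (\<lambda>x. ennreal (normal_density 0 (sqrt (t - s)) x))) \<and>
     (\<forall>(n::nat) (u::nat \<Rightarrow> real). 0 \<le> u 0 \<and> (\<forall>i<n. u i < u (Suc i)) \<longrightarrow>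
        prob_space.indep_vars M (\<lambda>_. borel) (\<lambda>i \<omega>. W (u (Suc i)) \<omega> - W (u i) \<omega>) {..<n})"

definition drift :: "real \<Rightarrow> real \<Rightarrow> (real \<Rightarrow> real) \<Rightarrow> real \<Rightarrow> real \<Rightarrow> real" where
  "drift a \<kappa> h \<theta> x = a * \<bar>x - \<theta>\<bar> powr \<kappa> + h x"

text \<open>X solves dX_t = S(X_t) dt + eps dW_t, X_0 = x0, on [0,T] (additive noise, so the
  equation is the pathwise integral equation X_t = x0 + int_0^t S(X_s) ds + eps W_t).\<close>
definition sde_solution :: "'a measure \<Rightarrow> (real \<Rightarrow> 'a \<Rightarrow> real) \<Rightarrow> (real \<Rightarrow> real) \<Rightarrow> real \<Rightarrow> real
    \<Rightarrow> real \<Rightarrow> (real \<Rightarrow> 'a \<Rightarrow> real) \<Rightarrow> bool" where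
  "sde_solution M W Sf x0 \<epsilon> T X \<longleftrightarrow>
     (\<forall>t\<in>{0..T}. X t \<in> borel_measurable M) \<and>
     (\<forall>\<omega>\<in>space M. continuous_on {0..T} (\<lambda>t. X t \<omega>) \<and>
        (\<forall>t\<in>{0..T}. X t \<omega> = x0 + integral {0..t} (\<lambda>s. Sf (X s \<omega>)) + \<epsilon> * W t \<omega>))"

end

theory Submission
  imports Defs
begin

lemma nd_pointwise:
  fixes \<sigma> c y :: real
  assumes "\<sigma> > 0" "0 \<le> c" "c < \<bar>y\<bar>"
  shows "normal_density 0 \<sigma> y \<le> sqrt 2 * exp (-(c^2)/(4*\<sigma>^2)) * normal_density 0 (sqrt 2 * \<sigma>) y"
proof -
  have s: "sqrt (2 * pi * (sqrt 2 * \<sigma>)\<^sup>2) = sqrt 2 * sqrt (2 * pi * \<sigma>\<^sup>2)"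
    by (simp add: power_mult_distrib real_sqrt_mult[symmetric] ac_simps)
  have cy: "c^2 \<le> y^2" using assms by (metis abs_ge_zero abs_of_nonneg less_imp_le power2_abs power_mono)
  have e: "exp (-(y\<^sup>2)/(2*\<sigma>\<^sup>2)) \<le> exp (-(c^2)/(4*\<sigma>^2)) * exp (-(y\<^sup>2)/(2*(sqrt 2 * \<sigma>)\<^sup>2))"
  proof -
    have "-(y\<^sup>2)/(2*\<sigma>\<^sup>2) \<le> -(c^2)/(4*\<sigma>^2) + -(y\<^sup>2)/(2*(sqrt 2 * \<sigma>)\<^sup>2)"
      using cy assms by (simp add: power_mult_distrib field_simps)
    then show ?thesis by (simp add: exp_add[symmetric])
  qed
  have p: "sqrt (2 * pi * \<sigma>\<^sup>2) > 0" using assms by simp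
  show ?thesis unfolding normal_density_def s
    using e p by (simp add: field_simps)
qed

lemma nn_integral_normal_density: "\<sigma> > 0 \<Longrightarrow> (\<integral>\<^sup>+ x. ennreal (normal_density \<mu> \<sigma> x) \<partial>lborel) = 1"
  by (subst nn_integral_eq_integral) auto

lemma gauss_tail:
  fixes Z :: "'a \<Rightarrow> real"
  assumes d: "distributed M lborel Z (\<lambda>x. ennreal (normal_density 0 \<sigma> x))" and s: "\<sigma> > 0"
    and c: "0 \<le> c"
  shows "measure M {\<omega>\<in>space M. c < \<bar>Z \<omega>\<bar>} \<le> sqrt 2 * exp (-(c^2)/(4*\<sigma>^2))"
proof -
  let ?A = "{y::real. c < \<bar>y\<bar>}"
  have Am: "?A \<in> sets lborel" by measurable
  have Zm: "Z \<in> measurable M lborel" using d by (simp add: distributed_def)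
  have dd: "distr M lborel Z = density lborel (\<lambda>x. ennreal (normal_density 0 \<sigma> x))"
    using d by (simp add: distributed_def)
  have "measure M {\<omega>\<in>space M. c < \<bar>Z \<omega>\<bar>} = measure (distr M lborel Z) ?A"
    using Zm Am by (subst measure_distr) (auto intro!: arg_cong[where f="measure M"])
  also have "\<dots> = measure (density lborel (\<lambda>x. ennreal (normal_density 0 \<sigma> x))) ?A"
    by (simp add: dd)
  also have "\<dots> \<le> sqrt 2 * exp (-(c^2)/(4*\<sigma>^2))"
  proof -
    have "emeasure (density lborel (\<lambda>x. ennreal (normal_density 0 \<sigma> x))) ?A
        = (\<integral>\<^sup>+ y. ennreal (normal_density 0 \<sigma> y) * indicator ?A y \<partial>lborel)"
      using Am by (simp add: emeasure_density)
    also have "\<dots> \<le> (\<integral>\<^sup>+ y. ennreal (sqrt 2 * exp (-(c^2)/(4*\<sigma>^2))) * ennreal (normal_density 0 (sqrt 2 * \<sigma>) y) \<partial>lborel)"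
    proof (rule nn_integral_mono)
      fix y :: real
      show "ennreal (normal_density 0 \<sigma> y) * indicator ?A y \<le> ennreal (sqrt 2 * exp (-(c^2)/(4*\<sigma>^2))) * ennreal (normal_density 0 (sqrt 2 * \<sigma>) y)"
      proof (cases "c < \<bar>y\<bar>")
        case True
        then show ?thesis using nd_pointwise[OF s c True]
          by (simp add: ennreal_mult[symmetric])
      qed simp
    qed
    also have "\<dots> = ennreal (sqrt 2 * exp (-(c^2)/(4*\<sigma>^2)))"
      using s by (simp add: nn_integral_cmult nn_integral_normal_density)
    finally show ?thesis
      by (simp add: measure_def enn2real_leI)
  qed
  finally show ?thesis .
qed

lemma half_pow: "T / (2::real)^N = T * (1/2)^N" by (metis power_one_over times_divide_eq_right mult_1_right)

lemma dyadic_bound: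
  fixes f :: "real \<Rightarrow> real" and T r :: real
  assumes f0: "f 0 = 0" and r: "0 \<le> r"
    and inc: "\<And>n k. k < 2^n \<Longrightarrow> \<bar>f (real (Suc k) * T / 2^n) - f (real k * T / 2^n)\<bar> \<le> r * ((1/4) * (3/4)^n)"
  shows "k \<le> 2^N \<Longrightarrow> \<bar>f (real k * T / 2^N)\<bar> \<le> r * (1 - (3/4)^(Suc N))"
proof (induction N arbitrary: k)
  case 0
  then consider "k = 0" | "k = 1" by force
  then show ?case
  proof cases
    case 1 then show ?thesis using f0 r by simp
  next
    case 2
    have "\<bar>f (real (Suc 0) * T / 2^0) - f (real 0 * T / 2^0)\<bar> \<le> r * ((1/4) * (3/4)^0)"
      by (rule inc) simp
    then show ?thesis using 2 f0 by simp
  qed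
next
  case (Suc N)
  have mono: "r * (1 - (3/4)^(Suc N)) \<le> r * (1 - (3/4)^(Suc (Suc N)))"
    using r by (intro mult_left_mono) (auto simp: power_Suc)
  show ?case
  proof (cases "even k")
    case True
    then obtain j where kj: "k = 2*j" by blast
    with Suc.prems have "j \<le> 2^N" by simp
    from Suc.IH[OF this] have "\<bar>f (real j * T / 2^N)\<bar> \<le> r * (1 - (3/4)^(Suc N))" .
    moreover have "real k * T / 2^(Suc N) = real j * T / 2^N" using kj by simp
    ultimately show ?thesis using mono by simp
  next
    case False
    then obtain j where kj: "k = Suc (2*j)" by (metis oddE Suc_eq_plus1)
    with Suc.prems have j: "j < 2^N" by simp
    then have "2*j \<le> 2^Suc N" by simp
    have "\<bar>f (real (Suc (2*j)) * T / 2^(Suc N)) - f (real (2*j) * T / 2^(Suc N))\<bar> \<le> r * ((1/4) * (3/4)^(Suc N))"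
      by (rule inc) (use j in simp)
    moreover from Suc.IH[of j] j have "\<bar>f (real j * T / 2^N)\<bar> \<le> r * (1 - (3/4)^(Suc N))" by simp
    moreover have "real (2*j) * T / 2^(Suc N) = real j * T / 2^N" by simp
    moreover have "r * ((1/4) * (3/4)^(Suc N)) + r * (1 - (3/4)^(Suc N)) = r * (1 - (3/4)^(Suc (Suc N)))"
      by (simp add: algebra_simps power_Suc)
    ultimately show ?thesis using kj by (smt (verit))
  qed
qed

lemma chain_bound:
  fixes f :: "real \<Rightarrow> real" and T r :: real
  assumes T: "T > 0" and cont: "continuous_on {0..T} f" and f0: "f 0 = 0" and r: "0 \<le> r"
    and inc: "\<And>n k. k < 2^n \<Longrightarrow> \<bar>f (real (Suc k) * T / 2^n) - f (real k * T / 2^n)\<bar> \<le> r * ((1/4) * (3/4)^n)"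
    and t: "t \<in> {0..T}"
  shows "\<bar>f t\<bar> \<le> r"
proof -
  define k where "k N = nat \<lfloor>t * 2^N / T\<rfloor>" for N :: nat
  define s where "s N = real (k N) * T / 2^N" for N :: nat
  have kN: "real (k N) = of_int \<lfloor>t * 2^N / T\<rfloor>" for N
    using t T unfolding k_def by (simp)
  have s_le: "s N \<le> t" for N
  proof -
    have "real (k N) \<le> t * 2^N / T" using kN[of N] of_int_floor_le[of "t * 2^N / T"] by linarith
    then have "real (k N) * T \<le> t * 2^N" using T by (simp add: pos_le_divide_eq)
    then show ?thesis unfolding s_def by (simp add: pos_divide_le_eq)
  qed
  have s_ge: "t - T / 2^N \<le> s N" for N
  proof -
    have "t * 2^N / T - 1 \<le> real (k N)" using kN[of N] real_of_int_floor_gt_diff_one[of "t * 2^N / T"] by linarith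
    then have "(t * 2^N / T - 1) * T / 2^N \<le> real (k N) * T / 2^N"
      using T by (intro divide_right_mono mult_right_mono) auto
    moreover have "(t * 2^N / T - 1) * T = t * 2^N - T" using T by (simp add: algebra_simps)
    then have "(t * 2^N / T - 1) * T / 2^N = t - T / 2^N" by (simp add: diff_divide_distrib)
    ultimately show ?thesis unfolding s_def by simp
  qed
  have s_nn: "0 \<le> s N" for N using T unfolding s_def by simp
  have k_le: "k N \<le> 2^N" for N
  proof -
    have "t * 2^N \<le> 2^N * T" using t by (simp add: mult.commute)
    then have "t * 2^N / T \<le> 2^N" using T by (simp add: pos_divide_le_eq)
    then have "real (k N) \<le> 2^N" using kN[of N] of_int_floor_le[of "t * 2^N / T"] by linarith
    then have "real (k N) \<le> real ((2::nat)^N)" by simp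
    then show ?thesis by (simp only: of_nat_le_iff)
  qed
  have bnd: "\<bar>f (s N)\<bar> \<le> r" for N
  proof -
    have "\<bar>f (s N)\<bar> \<le> r * (1 - (3/4)^(Suc N))"
      unfolding s_def by (rule dyadic_bound[OF f0 r inc k_le])
    also have "\<dots> \<le> r" using r by (simp add: mult_left_le)
    finally show ?thesis .
  qed
  have lim0: "(\<lambda>N. t - T / 2^N) \<longlonglongrightarrow> t"
  proof -
    have "(\<lambda>N. T * (1/2)^N) \<longlonglongrightarrow> T * 0"
      by (intro tendsto_mult tendsto_const LIMSEQ_power_zero) auto
    then have "(\<lambda>N. T / 2^N) \<longlonglongrightarrow> 0" unfolding half_pow by simp
    then show ?thesis using tendsto_diff[OF tendsto_const, of "\<lambda>N. T / 2^N" 0 sequentially t] by simp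
  qed
  have "s \<longlonglongrightarrow> t"
    by (rule real_tendsto_sandwich[OF _ _ lim0 tendsto_const]) (use s_ge s_le in auto)
  then have "(\<lambda>N. f (s N)) \<longlonglongrightarrow> f t"
    by (rule continuous_on_tendsto_compose[OF cont]) (use t s_nn s_le in \<open>auto intro!: always_eventually order_trans[OF s_le]\<close>)
  then have "(\<lambda>N. \<bar>f (s N)\<bar>) \<longlonglongrightarrow> \<bar>f t\<bar>" by (rule tendsto_rabs)
  then show ?thesis by (rule tendsto_upperbound) (use bnd in auto)
qed

lemma powr_subadd:
  fixes x y k :: real
  assumes "0 \<le> x" "0 \<le> y" "0 < k" "k \<le> 1"
  shows "(x + y) powr k \<le> x powr k + y powr k"
proof (cases "x + y = 0")
  case True then show ?thesis using assms by simp
next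
  case False
  define s where "s = x + y"
  have s: "s > 0" using False assms unfolding s_def by simp
  have low: "z \<le> z powr k" if "0 \<le> z" "z \<le> 1" for z :: real
  proof (cases "z = 0")
    case True then show ?thesis by simp
  next
    case False
    have "z powr 1 \<le> z powr k" by (rule powr_mono') (use that assms in auto)
    then show ?thesis using that by (simp add: powr_one)
  qed
  have "x / s \<le> (x / s) powr k" using assms s by (intro low) (auto simp: s_def)
  then have hx: "x / s \<le> x powr k / s powr k" using assms s by (simp add: powr_divide)
  have "y / s \<le> (y / s) powr k" using assms s by (intro low) (auto simp: s_def)
  then have hy: "y / s \<le> y powr k / s powr k" using assms s by (simp add: powr_divide)
  have sp: "s powr k > 0" using s by simp
  have "1 = x / s + y / s" using s unfolding s_def by (simp add: add_divide_distrib[symmetric])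
  also have "\<dots> \<le> (x powr k + y powr k) / s powr k" using hx hy by (simp add: add_divide_distrib)
  finally have "s powr k \<le> x powr k + y powr k" using sp by (simp add: pos_le_divide_eq)
  then show ?thesis unfolding s_def .
qed

lemma powr_diff_le:
  fixes p q k :: real
  assumes "0 \<le> p" "0 \<le> q" "0 < k" "k \<le> 1"
  shows "\<bar>p powr k - q powr k\<bar> \<le> \<bar>p - q\<bar> powr k"
proof -
  have main: "\<bar>p powr k - q powr k\<bar> \<le> \<bar>p - q\<bar> powr k" if "0 \<le> q" "q \<le> p" for p q :: real
  proof -
    have "p powr k = (q + (p - q)) powr k" by simp
    also have "\<dots> \<le> q powr k + (p - q) powr k" by (rule powr_subadd) (use that assms in auto)
    finally have "p powr k - q powr k \<le> (p - q) powr k" by simp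
    moreover have "q powr k \<le> p powr k" by (rule powr_mono2) (use that assms in auto)
    ultimately show ?thesis using that by simp
  qed
  show ?thesis
  proof (cases "q \<le> p")
    case True then show ?thesis using main[OF assms(2) True] by simp
  next
    case False then show ?thesis using main[of p q] assms by (simp add: abs_minus_commute)
  qed
qed

lemma lip_h:
  fixes h h' :: "real \<Rightarrow> real"
  assumes d: "\<And>y. (h has_real_derivative h' y) (at y)" and bd: "\<And>y. \<bar>h' y\<bar> \<le> H1"
  shows "\<bar>h u - h v\<bar> \<le> H1 * \<bar>u - v\<bar>"
proof -
  have main: "\<bar>h v - h u\<bar> \<le> H1 * \<bar>v - u\<bar>" if uv: "u < v" for u v
  proof -
    obtain z where "h v - h u = (v - u) * h' z" using MVT2[OF uv, of h h'] d by blast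
    then have "\<bar>h v - h u\<bar> = \<bar>v - u\<bar> * \<bar>h' z\<bar>" by (simp add: abs_mult)
    also have "\<dots> \<le> \<bar>v - u\<bar> * H1" by (rule mult_left_mono[OF bd]) simp
    finally show ?thesis by (simp add: mult.commute)
  qed
  show ?thesis
  proof (cases u v rule: linorder_cases)
    case less then show ?thesis using main[OF less] by (simp add: abs_minus_commute)
  next
    case equal then show ?thesis by simp
  next
    case greater then show ?thesis using main[OF greater] by simp
  qed
qed

lemma drift_lip:
  fixes h h' :: "real \<Rightarrow> real"
  assumes d: "\<And>y. (h has_real_derivative h' y) (at y)" and bd: "\<And>y. \<bar>h' y\<bar> \<le> H1"
    and a: "0 < a" and k: "0 < \<kappa>" "\<kappa> \<le> 1" and eta: "0 \<le> \<eta>" "\<eta> \<le> 1"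
    and uv: "\<bar>u - v\<bar> \<le> \<eta>"
  shows "\<bar>drift a \<kappa> h \<theta> u - drift a \<kappa> h \<theta> v\<bar> \<le> (a + H1) * \<eta> powr \<kappa>"
proof -
  have H1: "0 \<le> H1" using bd[of 0] by simp
  have "\<bar>\<bar>u - \<theta>\<bar> powr \<kappa> - \<bar>v - \<theta>\<bar> powr \<kappa>\<bar> \<le> \<bar>\<bar>u - \<theta>\<bar> - \<bar>v - \<theta>\<bar>\<bar> powr \<kappa>"
    by (rule powr_diff_le) (use k in auto)
  also have "\<dots> \<le> \<eta> powr \<kappa>"
    by (rule powr_mono2) (use k uv in auto)
  finally have p: "\<bar>\<bar>u - \<theta>\<bar> powr \<kappa> - \<bar>v - \<theta>\<bar> powr \<kappa>\<bar> \<le> \<eta> powr \<kappa>" .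
  have hh: "\<bar>h u - h v\<bar> \<le> H1 * \<eta>"
    using lip_h[OF d bd, of u v] uv H1 by (meson mult_left_mono order_trans)
  have ek: "\<eta> \<le> \<eta> powr \<kappa>"
  proof (cases "\<eta> = 0")
    case True then show ?thesis by simp
  next
    case False
    have "\<eta> powr 1 \<le> \<eta> powr \<kappa>" by (rule powr_mono') (use eta k in auto)
    then show ?thesis using eta by (simp add: powr_one)
  qed
  have "\<bar>drift a \<kappa> h \<theta> u - drift a \<kappa> h \<theta> v\<bar>
      = \<bar>a * (\<bar>u - \<theta>\<bar> powr \<kappa> - \<bar>v - \<theta>\<bar> powr \<kappa>) + (h u - h v)\<bar>"
    unfolding drift_def by (simp add: algebra_simps)
  also have "\<dots> \<le> a * \<bar>\<bar>u - \<theta>\<bar> powr \<kappa> - \<bar>v - \<theta>\<bar> powr \<kappa>\<bar> + \<bar>h u - h v\<bar>"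
    using a by (simp add: abs_mult abs_triangle_ineq[THEN order_trans])
  also have "\<dots> \<le> a * \<eta> powr \<kappa> + H1 * \<eta> powr \<kappa>"
    using p hh a H1 ek by (smt (verit) mult_left_mono)
  finally show ?thesis by (simp add: algebra_simps)
qed

lemma drift_cont:
  fixes h h' :: "real \<Rightarrow> real"
  assumes d: "\<And>y. (h has_real_derivative h' y) (at y)" and k: "0 < \<kappa>"
  shows "continuous_on UNIV (drift a \<kappa> h \<theta>)"
proof -
  have hc: "continuous_on UNIV h"
    using d by (intro continuous_at_imp_continuous_on) (auto intro: DERIV_isCont)
  have pc: "continuous_on UNIV (\<lambda>y. \<bar>y - \<theta>\<bar> powr \<kappa>)"
    by (rule continuous_on_powr') (use k in \<open>auto intro!: continuous_intros\<close>)
  show ?thesis unfolding drift_def[abs_def]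
    by (intro continuous_intros pc hc)
qed

lemma R_choice:
  fixes T a H0 D \<kappa> :: real
  assumes T: "T > 0" and a: "a > 0" and H0: "H0 \<ge> 0" and D: "D \<ge> 0" and k: "0 < \<kappa>" "\<kappa> < 1/2"
  shows "\<exists>R>0. R > 2*T*(a*(D+R) powr \<kappa> + H0)"
proof -
  define c where "c = 4*T*a + 2*T*H0 + 1"
  have c1: "c \<ge> 1" using T a H0 unfolding c_def by (simp add: mult_nonneg_nonneg)
  define R where "R = max (max 1 D) (c^2)"
  have R1: "R \<ge> 1" and RD: "R \<ge> D" and Rc: "R \<ge> c^2" unfolding R_def by auto
  have Rk1: "R powr \<kappa> \<ge> 1" using R1 k by (intro ge_one_powr_ge_zero) auto
  have "(D + R) powr \<kappa> \<le> (2 * R) powr \<kappa>" by (rule powr_mono2) (use k D RD in auto)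
  also have "\<dots> = 2 powr \<kappa> * R powr \<kappa>" using R1 by (simp add: powr_mult)
  also have "\<dots> \<le> 2 * R powr \<kappa>"
  proof -
    have "2 powr \<kappa> \<le> 2 powr (1::real)" by (rule powr_mono) (use k in auto)
    then show ?thesis using Rk1 by (intro mult_right_mono) auto
  qed
  finally have DR: "(D + R) powr \<kappa> \<le> 2 * R powr \<kappa>" .
  have "2*T*(a*(D+R) powr \<kappa> + H0) \<le> 2*T*(a*(2 * R powr \<kappa>) + H0)"
    using DR T a by (intro mult_left_mono add_right_mono) auto
  also have "\<dots> = 4*T*a * R powr \<kappa> + 2*T*H0" by (simp add: algebra_simps)
  also have "\<dots> \<le> (4*T*a + 2*T*H0) * R powr \<kappa>"
  proof -
    have "2*T*H0 * 1 \<le> 2*T*H0 * R powr \<kappa>" by (rule mult_left_mono[OF Rk1]) (use T H0 in simp)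
    then show ?thesis by (simp add: algebra_simps)
  qed
  also have "\<dots> < c * R powr \<kappa>" using Rk1 R1 unfolding c_def by (simp add: distrib_right)
  also have "c \<le> R powr (1 - \<kappa>)"
  proof -
    have "c \<le> sqrt R" using c1 Rc by (simp add: real_le_rsqrt)
    also have "\<dots> = R powr (1/2)" using R1 by (simp add: powr_half_sqrt)
    also have "\<dots> \<le> R powr (1 - \<kappa>)" by (rule powr_mono) (use k R1 in auto)
    finally show ?thesis .
  qed
  then have "c * R powr \<kappa> \<le> R powr (1 - \<kappa>) * R powr \<kappa>" using Rk1 by (intro mult_right_mono) auto
  also have "\<dots> = R" using R1 by (simp add: powr_add[symmetric])
  finally show ?thesis using R1 by (intro exI[of _ R]) auto
qed

lemma tail_algebra:
  fixes r T :: real and n :: nat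
  assumes "T > 0"
  shows "(r * ((1/4) * (3/4)^n))^2 / (4 * (T / 2^n)) = r^2 / (64*T) * (9/8)^n"
proof -
  have "((3/4::real)^n)^2 * 2^n = ((3/4)^2)^n * 2^n" by (metis power_mult mult.commute)
  also have "\<dots> = ((3/4)^2 * 2)^n" by (rule power_mult_distrib[symmetric])
  also have "((3/4::real)^2 * 2) = 9/8" by (simp add: power2_eq_square)
  finally have "((3/4::real)^n)^2 * 2^n = (9/8)^n" .
  then show ?thesis using assms by (simp add: power_mult_distrib field_simps)
qed

lemma sum_term_bound:
  fixes K :: real and n :: nat
  assumes K: "K \<ge> 32"
  shows "2^n * (sqrt 2 * exp (-(K * (9/8)^n))) \<le> sqrt 2 * exp (-K) * (1/2)^n"
proof -
  have "1 + real n * (1/8) \<le> (1 + 1/8::real)^n" by (rule Bernoulli_inequality) simp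
  then have b: "K * (1 + real n / 8) \<le> K * (9/8)^n" using K by (intro mult_left_mono) auto
  have "exp (-(K * (9/8)^n)) \<le> exp (-(K * (1 + real n / 8)))" using b by simp
  also have "\<dots> = exp (-K) * exp (-K/8) ^ n"
    by (simp add: exp_of_nat_mult[symmetric] exp_add[symmetric] algebra_simps)
  finally have e1: "exp (-(K * (9/8)^n)) \<le> exp (-K) * exp (-K/8) ^ n" .
  have e2: "exp (-K/8) \<le> 1/4"
  proof -
    have "1 + K/8 \<le> exp (K/8)" by (rule exp_ge_add_one_self)
    then have "4 \<le> exp (K/8)" using K by linarith
    then show ?thesis by (simp add: exp_minus field_simps)
  qed
  have "(2::real)^n * exp (-K/8) ^ n \<le> 2^n * (1/4)^n"
    by (intro mult_left_mono power_mono e2) auto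
  also have "\<dots> = (1/2)^n" by (simp add: power_mult_distrib[symmetric])
  finally have e3: "(2::real)^n * exp (-K/8) ^ n \<le> (1/2)^n" .
  have "2^n * (sqrt 2 * exp (-(K * (9/8)^n))) \<le> 2^n * (sqrt 2 * (exp (-K) * exp (-K/8) ^ n))"
    using e1 by (intro mult_left_mono) auto
  also have "\<dots> = sqrt 2 * exp (-K) * (2^n * exp (-K/8) ^ n)" by (simp add: algebra_simps)
  also have "\<dots> \<le> sqrt 2 * exp (-K) * (1/2)^n" using e3 by (intro mult_left_mono) auto
  finally show ?thesis .
qed

lemma final_exp:
  fixes K :: real
  assumes "K \<ge> 32"
  shows "2 * sqrt 2 * exp (-K) \<le> exp (-(K/2))"
proof -
  have "1 + K/2 \<le> exp (K/2)" by (rule exp_ge_add_one_self)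
  moreover have "sqrt 2 \<le> 2"
  proof -
    have "sqrt 2 \<le> sqrt (2^2)" by (subst real_sqrt_le_iff) simp
    then show ?thesis by simp
  qed
  ultimately have "2 * sqrt 2 \<le> exp (K/2)" using assms by linarith
  then have "2 * sqrt 2 * exp (-K) \<le> exp (K/2) * exp (-K)" by (intro mult_right_mono) auto
  also have "\<dots> = exp (-(K/2))" by (simp add: exp_add[symmetric])
  finally show ?thesis .
qed

lemma pathwise:
  fixes S X g x :: "real \<Rightarrow> real" and T x0 b R Smax \<eta> Lc t :: real
  assumes T: "T > 0" and Scont: "continuous_on UNIV S" and Sb: "\<And>y. b \<le> S y" and b: "b > 0"
    and Smax: "\<And>z. z \<in> {x0..x0+R} \<Longrightarrow> S z \<le> Smax" and R: "R > 2*T*Smax" and R0: "R > 0"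
    and Lip: "\<And>u v. \<bar>u - v\<bar> \<le> \<eta> \<Longrightarrow> \<bar>S u - S v\<bar> \<le> Lc" and Lcb: "Lc \<le> b"
    and Xc: "continuous_on {0..T} X"
    and Xeq: "\<And>t. t \<in> {0..T} \<Longrightarrow> X t = x0 + integral {0..t} (\<lambda>s. S (X s)) + g t"
    and g: "\<And>t. t \<in> {0..T} \<Longrightarrow> \<bar>g t\<bar> \<le> \<eta>"
    and x0': "x 0 = x0" and xd: "\<And>t. t \<in> {0..T} \<Longrightarrow> (x has_real_derivative S (x t)) (at t within {0..T})"
    and t: "t \<in> {0..T}"
  shows "\<bar>X t - x t\<bar> \<le> \<eta> + Smax * T * Lc / b"
proof -
  have Spos: "S y > 0" for y using Sb[of y] b by linarith
  have Smax_pos: "Smax \<ge> b" using Smax[of x0] Sb[of x0] R0 by simp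
  have eta0: "0 \<le> \<eta>" using g[of 0] T by force
  have Lc0: "0 \<le> Lc" using Lip[of 0 0] eta0 by simp
  define F where "F y = integral {x0-1..y} (\<lambda>z. 1 / S z)" for y
  have ic: "continuous_on UNIV (\<lambda>z. 1 / S z)"
    by (intro continuous_intros Scont) (use Spos in \<open>auto simp: less_imp_neq[symmetric]\<close>)
  have icI: "(\<lambda>z. 1 / S z) integrable_on {u..v}" for u v
    by (rule integrable_continuous_interval) (rule continuous_on_subset[OF ic], simp)
  have Fd: "(F has_real_derivative 1 / S y) (at y)" if "y > x0 - 1" for y
  proof -
    have "((\<lambda>y. integral {x0-1..y} (\<lambda>z. 1 / S z)) has_real_derivative 1 / S y) (at y within {x0-1..y+1})"
      by (rule integral_has_real_derivative) (use that in \<open>auto intro: continuous_on_subset[OF ic]\<close>)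
    then show ?thesis using that unfolding F_def[abs_def] by (simp add: at_within_Icc_at)
  qed
  have Fdiff: "F v - F u = integral {u..v} (\<lambda>z. 1 / S z)" if "x0 - 1 \<le> u" "u \<le> v" for u v
    using Henstock_Kurzweil_Integration.integral_combine[OF that icI] unfolding F_def by simp
  have Flow: "(v - u) / Smax \<le> F v - F u" if "x0 \<le> u" "u \<le> v" "v \<le> x0 + R" for u v
  proof -
    have "integral {u..v} (\<lambda>z. 1 / Smax) \<le> integral {u..v} (\<lambda>z. 1 / S z)"
    proof (rule integral_le)
      fix z assume z: "z \<in> {u..v}"
      then have "S z \<le> Smax" using that by (intro Smax) auto
      then show "1 / Smax \<le> 1 / S z" using Spos[of z] by (simp add: frac_le)
    qed (auto intro: icI)
    moreover have "integral {u..v} (\<lambda>z. 1 / Smax) = (v - u) / Smax" using that by simp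
    ultimately show ?thesis using Fdiff[of u v] that by simp
  qed
  have Fmono: "F u \<le> F v" if "x0 - 1 \<le> u" "u \<le> v" for u v
  proof -
    have "0 \<le> integral {u..v} (\<lambda>z. 1 / S z)"
      by (rule integral_nonneg[OF icI]) (use Spos in \<open>auto simp: less_imp_le\<close>)
    then show ?thesis using Fdiff[OF that] by simp
  qed
  define Y where "Y t = x0 + integral {0..t} (\<lambda>s. S (X s))" for t
  have SXc: "continuous_on {0..T} (\<lambda>s. S (X s))"
    by (rule continuous_on_compose2[OF Scont Xc]) auto
  have Yd: "(Y has_real_derivative S (X s)) (at s within {0..T})" if "s \<in> {0..T}" for s
  proof -
    have "((\<lambda>t. x0 + integral {0..t} (\<lambda>s. S (X s))) has_real_derivative 0 + S (X s)) (at s within {0..T})"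
      by (rule DERIV_add[OF DERIV_const integral_has_real_derivative[OF SXc that]])
    then show ?thesis unfolding Y_def[abs_def] by simp
  qed
  have XY: "X s = Y s + g s" if "s \<in> {0..T}" for s using Xeq[OF that] unfolding Y_def by simp
  have Y0: "Y 0 = x0" unfolding Y_def by simp
  have Yge: "x0 \<le> Y s" if "s \<in> {0..T}" for s
  proof -
    have "(\<lambda>s. S (X s)) integrable_on {0..s}"
      by (rule integrable_continuous_interval, rule continuous_on_subset[OF SXc]) (use that in auto)
    then have "0 \<le> integral {0..s} (\<lambda>s. S (X s))"
      by (rule integral_nonneg) (simp add: Spos less_imp_le)
    then show ?thesis unfolding Y_def by simp
  qed
  have FTC: "((\<lambda>s. D s) has_integral (f t - f 0)) {0..t}"
    if "\<And>s. s \<in> {0..T} \<Longrightarrow> (f has_real_derivative D s) (at s within {0..T})" for f D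
  proof (rule fundamental_theorem_of_calculus)
    show "0 \<le> t" using t by simp
    fix s assume s: "s \<in> {0..t}"
    then have "s \<in> {0..T}" using t by simp
    from that[OF this] have "(f has_real_derivative D s) (at s within {0..t})"
      by (rule DERIV_subset) (use t in auto)
    then show "(f has_vector_derivative D s) (at s within {0..t})"
      by (simp add: has_real_derivative_iff_has_vector_derivative)
  qed
  have xge: "x0 \<le> x t"
  proof -
    have "((\<lambda>s. S (x s)) has_integral (x t - x 0)) {0..t}" by (rule FTC[OF xd])
    then have "0 \<le> x t - x 0" by (rule has_integral_nonneg) (use Spos in \<open>auto simp: less_imp_le\<close>)
    then show ?thesis using x0' by simp
  qed
  have xge_all: "x0 \<le> x s" if "s \<in> {0..T}" for s
  proof -
    have "(x has_real_derivative S (x r)) (at r within {0..s})" if "r \<in> {0..s}" for r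
      using xd[of r] that \<open>s \<in> {0..T}\<close> by (auto intro: DERIV_subset)
    then have "((\<lambda>r. S (x r)) has_integral (x s - x 0)) {0..s}"
      using that by (intro fundamental_theorem_of_calculus) (auto simp: has_real_derivative_iff_has_vector_derivative)
    then have "0 \<le> x s - x 0" by (rule has_integral_nonneg) (use Spos in \<open>auto simp: less_imp_le\<close>)
    then show ?thesis using x0' by simp
  qed
  have Fx: "F (x t) - F x0 = t"
  proof -
    have "((\<lambda>s. 1) has_integral (F (x t) - F (x 0))) {0..t}"
    proof (rule FTC)
      fix s assume s: "s \<in> {0..T}"
      have "(F \<circ> x has_real_derivative (1 / S (x s)) * S (x s)) (at s within {0..T})"
        by (rule DERIV_chain[OF Fd xd[OF s]]) (use xge_all[OF s] in simp)
      then show "((\<lambda>s. F (x s)) has_real_derivative 1) (at s within {0..T})"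
        using Spos[of "x s"] by (simp add: o_def)
    qed
    moreover have "((\<lambda>s. 1) has_integral t) {0..t}" using has_integral_const_real[of "1::real" 0 t] t by simp
    ultimately show ?thesis using x0' by (metis has_integral_unique)
  qed
  have Fphi: "\<bar>F (Y t) - F (x t)\<bar> \<le> Lc / b * t"
  proof -
    have "((\<lambda>s. (1 / S (Y s)) * S (X s) - (1 / S (x s)) * S (x s)) has_integral
        ((F (Y t) - F (x t)) - (F (Y 0) - F (x 0)))) {0..t}"
    proof (rule FTC)
      fix s assume s: "s \<in> {0..T}"
      have a: "(F \<circ> Y has_real_derivative (1 / S (Y s)) * S (X s)) (at s within {0..T})"
        by (rule DERIV_chain[OF Fd Yd[OF s]]) (use Yge[OF s] in simp)
      have c: "(F \<circ> x has_real_derivative (1 / S (x s)) * S (x s)) (at s within {0..T})"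
        by (rule DERIV_chain[OF Fd xd[OF s]]) (use xge_all[OF s] in simp)
      show "((\<lambda>s. F (Y s) - F (x s)) has_real_derivative (1 / S (Y s)) * S (X s) - (1 / S (x s)) * S (x s)) (at s within {0..T})"
        using DERIV_diff[OF a c] by (simp add: o_def)
    qed
    then have hi: "((\<lambda>s. (1 / S (Y s)) * S (X s) - (1 / S (x s)) * S (x s)) has_integral
        (F (Y t) - F (x t))) (cbox 0 t)" using Y0 x0' by simp
    have "norm (F (Y t) - F (x t)) \<le> Lc / b * measure lborel (cbox 0 t)"
    proof (rule has_integral_bound[OF _ hi])
      show "0 \<le> Lc / b" using Lc0 b by simp
      fix s assume "s \<in> cbox 0 t"
      then have s: "s \<in> {0..T}" using t by auto
      have "\<bar>X s - Y s\<bar> \<le> \<eta>" using XY[OF s] g[OF s] by simp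
      then have L: "\<bar>S (X s) - S (Y s)\<bar> \<le> Lc" by (rule Lip)
      have "(1 / S (Y s)) * S (X s) - (1 / S (x s)) * S (x s) = (S (X s) - S (Y s)) / S (Y s)"
        using Spos[of "Y s"] Spos[of "x s"] by (simp add: field_simps)
      also have "\<bar>\<dots>\<bar> \<le> Lc / b"
        using L Sb[of "Y s"] b Spos[of "Y s"] Lc0
        by (simp add: abs_div frac_le)
      finally show "norm ((1 / S (Y s)) * S (X s) - (1 / S (x s)) * S (x s)) \<le> Lc / b" by simp
    qed
    then show ?thesis using t by simp
  qed
  have Lcb1: "Lc / b \<le> 1" using Lcb b by simp
  have tT: "0 \<le> t" "t \<le> T" using t by auto
  have key: "F v - F x0 \<le> 2 * T \<Longrightarrow> x0 \<le> v \<Longrightarrow> v \<le> x0 + R" for v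
  proof (rule ccontr)
    assume a: "F v - F x0 \<le> 2 * T" "x0 \<le> v" "\<not> v \<le> x0 + R"
    have "R / Smax \<le> F (x0 + R) - F x0" using Flow[of x0 "x0+R"] R0 by simp
    also have "F (x0 + R) \<le> F v" using a R0 by (intro Fmono) auto
    finally have "R / Smax \<le> F v - F x0" by simp
    moreover have "2 * T < R / Smax" using R Smax_pos b by (simp add: pos_less_divide_eq mult.commute)
    ultimately show False using a by simp
  qed
  have xR: "x t \<le> x0 + R" by (rule key) (use Fx tT xge in auto)
  have YR: "Y t \<le> x0 + R"
  proof (rule key)
    have "Lc / b * t \<le> 1 * T" using Lcb1 tT Lc0 b by (intro mult_mono) auto
    then show "F (Y t) - F x0 \<le> 2 * T" using Fphi Fx tT by linarith
  qed (use Yge t in auto)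
  have YX: "\<bar>Y t - x t\<bar> \<le> Smax * \<bar>F (Y t) - F (x t)\<bar>"
  proof (cases "x t \<le> Y t")
    case True
    from Flow[OF xge True YR] Smax_pos b have "Y t - x t \<le> Smax * (F (Y t) - F (x t))"
      by (simp add: pos_divide_le_eq mult.commute)
    moreover have "Smax * (F (Y t) - F (x t)) \<le> Smax * \<bar>F (Y t) - F (x t)\<bar>"
      using Smax_pos b by (intro mult_left_mono) auto
    ultimately show ?thesis using True by simp
  next
    case False
    from Flow[of "Y t" "x t"] Yge[OF t] False xR Smax_pos b have "x t - Y t \<le> Smax * (F (x t) - F (Y t))"
      by (simp add: pos_divide_le_eq mult.commute)
    moreover have "Smax * (F (x t) - F (Y t)) \<le> Smax * \<bar>F (Y t) - F (x t)\<bar>"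
      using Smax_pos b by (intro mult_left_mono) auto
    ultimately show ?thesis using False by simp
  qed
  also have "\<dots> \<le> Smax * (Lc / b * t)" using Fphi Smax_pos b by (intro mult_left_mono) auto
  also have "\<dots> \<le> Smax * T * Lc / b"
  proof -
    have "Lc / b * t \<le> Lc / b * T" using tT Lc0 b by (intro mult_left_mono) auto
    then have "Smax * (Lc / b * t) \<le> Smax * (Lc / b * T)" by (rule mult_left_mono) (use Smax_pos b in auto)
    then show ?thesis by (simp add: algebra_simps)
  qed
  finally have "\<bar>Y t - x t\<bar> \<le> Smax * T * Lc / b" .
  moreover have "\<bar>X t - x t\<bar> \<le> \<bar>g t\<bar> + \<bar>Y t - x t\<bar>" using XY[OF t] by simp
  ultimately show ?thesis using g[OF t] by simp
qed

lemma wiener_chain_prob: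
  fixes W :: "real \<Rightarrow> 'a \<Rightarrow> real" and T r :: real
  assumes sw: "standard_wiener M W" and T: "T > 0" and r: "0 \<le> r" and K: "r^2 / (64*T) \<ge> 32"
  defines "G \<equiv> (\<lambda>n::nat. {\<omega>\<in>space M. \<exists>k<(2::nat)^n. r * ((1/4) * (3/4)^n) < \<bar>W (real (Suc k) * T / 2^n) \<omega> - W (real k * T / 2^n) \<omega>\<bar>})"
  shows "(\<Union>n. G n) \<in> sets M" "measure M (\<Union>n. G n) \<le> 2 * sqrt 2 * exp (-(r^2 / (64*T)))"
proof -
  interpret prob_space M using sw by (simp add: standard_wiener_def)
  define K where "K = r^2 / (64*T)"
  define E where "E n k = {\<omega>\<in>space M. r * ((1/4) * (3/4)^n) < \<bar>W (real (Suc k) * T / 2^n) \<omega> - W (real k * T / 2^n) \<omega>\<bar>}" for n k :: nat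
  have Wm: "W t \<in> borel_measurable M" if "t \<ge> 0" for t using sw that by (simp add: standard_wiener_def)
  have Em: "E n k \<in> sets M" for n k
  proof -
    have m1[measurable]: "W (real (Suc k) * T / 2^n) \<in> borel_measurable M" using T by (intro Wm) simp
    have m2[measurable]: "W (real k * T / 2^n) \<in> borel_measurable M" using T by (intro Wm) simp
    show ?thesis unfolding E_def by measurable
  qed
  have GE: "G n = (\<Union>k\<in>{..<2^n}. E n k)" for n unfolding G_def E_def by auto
  have Gm: "G n \<in> sets M" for n unfolding GE using Em by auto
  show "(\<Union>n. G n) \<in> sets M" using Gm by auto
  have PE: "measure M (E n k) \<le> sqrt 2 * exp (-(K * (9/8)^n))" for n k
  proof -
    define s where "s = real k * T / 2^n"
    define t where "t = real (Suc k) * T / 2^n"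
    have st: "0 \<le> s" "s < t" using T unfolding s_def t_def by (auto simp: divide_strict_right_mono)
    have ts: "t - s = T / 2^n" unfolding s_def t_def by (simp add: diff_divide_distrib[symmetric] algebra_simps)
    have d: "distributed M lborel (\<lambda>\<omega>. W t \<omega> - W s \<omega>) (\<lambda>x. ennreal (normal_density 0 (sqrt (T / 2^n)) x))"
      using sw st ts unfolding standard_wiener_def by metis
    have "measure M (E n k) \<le> sqrt 2 * exp (-((r * ((1/4) * (3/4)^n))^2)/(4*(sqrt (T / 2^n))^2))"
      unfolding E_def s_def[symmetric] t_def[symmetric]
      by (rule gauss_tail[OF d]) (use T r in auto)
    also have "(sqrt (T / 2^n))^2 = T / 2^n" using T by simp
    also have "-((r * ((1/4) * (3/4)^n))^2)/(4*(T / 2^n)) = -(K * (9/8)^n)"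
      using tail_algebra[OF T, of r n] unfolding K_def by (simp add: minus_divide_left[symmetric])
    finally show ?thesis .
  qed
  define q where "q n = sqrt 2 * exp (-K) * (1/2)^n" for n :: nat
  have PG: "measure M (G n) \<le> q n" for n
  proof -
    have "measure M (G n) \<le> (\<Sum>k\<in>{..<2^n}. measure M (E n k))"
      unfolding GE by (rule measure_UNION_le) (auto intro: Em)
    also have "\<dots> \<le> (\<Sum>k\<in>{..<(2::nat)^n}. sqrt 2 * exp (-(K * (9/8)^n)))"
      by (rule sum_mono) (rule PE)
    also have "\<dots> = 2^n * (sqrt 2 * exp (-(K * (9/8)^n)))" by simp
    also have "\<dots> \<le> q n" unfolding q_def by (rule sum_term_bound) (use K in \<open>simp add: K_def\<close>)
    finally show ?thesis .
  qed
  have sq: "summable q" unfolding q_def by (intro summable_mult summable_geometric) simp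
  have sG: "summable (\<lambda>n. measure M (G n))"
    by (rule summable_comparison_test[OF _ sq]) (use PG in auto)
  have "measure M (\<Union>n. G n) \<le> (\<Sum>n. measure M (G n))"
    by (rule finite_measure_subadditive_countably) (use Gm sG in auto)
  also have "\<dots> \<le> (\<Sum>n. q n)" by (rule suminf_le[OF PG sG sq])
  also have "(\<Sum>n. q n) = sqrt 2 * exp (-K) * 2"
  proof -
    have "(\<Sum>n. q n) = sqrt 2 * exp (-K) * (\<Sum>n. (1/2::real)^n)"
      unfolding q_def by (rule suminf_mult) (rule summable_geometric, simp)
    also have "(\<Sum>n. (1/2::real)^n) = 2" by (subst suminf_geometric) auto
    finally show ?thesis .
  qed
  finally show "measure M (\<Union>n. G n) \<le> 2 * sqrt 2 * exp (-(r^2 / (64*T)))" unfolding K_def by simp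
qed

lemma powr_tends0: "0 < p \<Longrightarrow> ((\<lambda>\<epsilon>::real. \<epsilon> powr p) \<longlongrightarrow> 0) (at_right 0)"
proof -
  assume p: "0 < p"
  have "((\<lambda>\<epsilon>::real. \<epsilon> powr p) \<longlongrightarrow> 0 powr p) (at_right 0)"
    by (rule tendsto_powr'[OF tendsto_ident_at tendsto_const])
       (use p in \<open>auto intro: eventually_mono[OF eventually_at_right_less] less_imp_le\<close>)
  then show ?thesis by simp
qed

theorem lemma2:
  fixes a \<kappa> x0 T \<alpha> \<beta> b H1 :: real
    and h h' :: "real \<Rightarrow> real"
    and x :: "real \<Rightarrow> real \<Rightarrow> real"
  assumes T_pos: "T > 0"
    and kappa: "0 < \<kappa>" "\<kappa> < 1/2"
    and a_pos: "a > 0"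
    and h_bdd: "\<exists>H0. \<forall>y. \<bar>h y\<bar> \<le> H0"
    and h_deriv: "\<And>y. (h has_real_derivative h' y) (at y)"
    and h'_cont: "continuous_on UNIV h'"
    and h'_bdd: "\<And>y. \<bar>h' y\<bar> \<le> H1"
    and b_pos: "b > 0"
    and h_lower: "\<And>y. h y \<ge> b"
    and x_ode: "\<And>\<theta>. \<theta> \<in> {\<alpha><..<\<beta>} \<Longrightarrow> x \<theta> 0 = x0 \<and>
          (\<forall>t\<in>{0..T}. (x \<theta> has_real_derivative drift a \<kappa> h \<theta> (x \<theta> t)) (at t within {0..T}))"
    and alpha: "\<alpha> > x0"
    and beta: "\<beta> < (INF \<theta>\<in>{\<alpha><..<\<beta>}. x \<theta> T)"
  shows "\<forall>\<kappa>1. 0 < \<kappa>1 \<and> \<kappa>1 < \<kappa> \<longrightarrow>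
    (\<exists>\<nu> c \<epsilon>0. \<nu> > 0 \<and> c > 0 \<and> \<epsilon>0 > 0 \<and>
      (\<forall>\<epsilon>. 0 < \<epsilon> \<and> \<epsilon> < \<epsilon>0 \<longrightarrow>
        (\<forall>\<theta>\<in>{\<alpha><..<\<beta>}. \<forall>(M :: 'a measure) W X.
           standard_wiener M W \<and> sde_solution M W (drift a \<kappa> h \<theta>) x0 \<epsilon> T X \<longrightarrow>
           prob_space.prob M {\<omega>\<in>space M. (\<Squnion>t\<in>{0..T}. \<bar>X t \<omega> - x \<theta> t\<bar>) > \<epsilon> powr \<kappa>1}
             \<le> exp (- c * \<epsilon> powr (- \<nu>)))))"
proof (intro allI impI)
  fix \<kappa>1 :: real assume k1: "0 < \<kappa>1 \<and> \<kappa>1 < \<kappa>"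
  obtain H0 where H0: "\<And>y. \<bar>h y\<bar> \<le> H0" using h_bdd by blast
  have H0pos: "0 \<le> H0" using H0[of 0] by simp
  have H1pos: "0 \<le> H1" using h'_bdd[of 0] by simp
  define D where "D = \<bar>\<beta> - x0\<bar>"
  obtain R where R0: "R > 0" and R: "R > 2*T*(a*(D+R) powr \<kappa> + H0)"
    using R_choice[OF T_pos a_pos H0pos _ kappa, of D] unfolding D_def by auto
  define Smax where "Smax = a*(D+R) powr \<kappa> + H0"
  define \<gamma> where "\<gamma> = (1 + \<kappa>1/\<kappa>)/2"
  have g1: "\<kappa>1/\<kappa> < 1" using k1 kappa by simp
  have g2: "0 < \<kappa>1/\<kappa>" using k1 kappa by simp
  have \<gamma>1: "\<gamma> < 1" "0 < \<gamma>" "\<kappa>1 < \<gamma> * \<kappa>" using g1 g2 kappa unfolding \<gamma>_def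
    by (auto simp: field_simps)
  define \<nu> where "\<nu> = 2 * (1 - \<gamma>)"
  have \<nu>0: "\<nu> > 0" using \<gamma>1 unfolding \<nu>_def by simp
  define C where "C = 1 + Smax * T * (a + H1) / b"
  have gk: "0 < \<gamma> * \<kappa>" using \<gamma>1 kappa by simp
  have ev1: "eventually (\<lambda>\<epsilon>::real. \<epsilon> < 1) (at_right 0)"
    by (rule eventually_at_rightI[of 0 1]) auto
  have ev2: "eventually (\<lambda>\<epsilon>. (a + H1) * \<epsilon> powr (\<gamma> * \<kappa>) < b) (at_right 0)"
  proof -
    have "((\<lambda>\<epsilon>. (a + H1) * \<epsilon> powr (\<gamma> * \<kappa>)) \<longlongrightarrow> (a + H1) * 0) (at_right 0)"
      by (intro tendsto_mult tendsto_const powr_tends0 gk)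
    then have "((\<lambda>\<epsilon>. (a + H1) * \<epsilon> powr (\<gamma> * \<kappa>)) \<longlongrightarrow> 0) (at_right 0)" by simp
    then show ?thesis by (rule order_tendstoD(2)) (use b_pos in simp)
  qed
  have ev3: "eventually (\<lambda>\<epsilon>. C * \<epsilon> powr (\<gamma> * \<kappa> - \<kappa>1) < 1) (at_right 0)"
  proof -
    have "((\<lambda>\<epsilon>. C * \<epsilon> powr (\<gamma> * \<kappa> - \<kappa>1)) \<longlongrightarrow> C * 0) (at_right 0)"
      by (intro tendsto_mult tendsto_const powr_tends0) (use \<gamma>1 in simp)
    then have "((\<lambda>\<epsilon>. C * \<epsilon> powr (\<gamma> * \<kappa> - \<kappa>1)) \<longlongrightarrow> 0) (at_right 0)" by simp
    then show ?thesis by (rule order_tendstoD(2)) simp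
  qed
  have ev4: "eventually (\<lambda>\<epsilon>. \<epsilon> powr \<nu> < 1 / (2048 * T)) (at_right 0)"
  proof -
    have "((\<lambda>\<epsilon>. \<epsilon> powr \<nu>) \<longlongrightarrow> 0) (at_right 0)" by (rule powr_tends0[OF \<nu>0])
    then show ?thesis by (rule order_tendstoD(2)) (use T_pos in simp)
  qed
  have "eventually (\<lambda>\<epsilon>. \<epsilon> < 1 \<and> (a + H1) * \<epsilon> powr (\<gamma> * \<kappa>) < b \<and> C * \<epsilon> powr (\<gamma> * \<kappa> - \<kappa>1) < 1
      \<and> \<epsilon> powr \<nu> < 1 / (2048 * T)) (at_right 0)"
    using ev1 ev2 ev3 ev4 by (intro eventually_conj)
  then obtain \<epsilon>0 where \<epsilon>0: "\<epsilon>0 > 0" and P: "\<And>\<epsilon>. 0 < \<epsilon> \<Longrightarrow> \<epsilon> < \<epsilon>0 \<Longrightarrow>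
      \<epsilon> < 1 \<and> (a + H1) * \<epsilon> powr (\<gamma> * \<kappa>) < b \<and> C * \<epsilon> powr (\<gamma> * \<kappa> - \<kappa>1) < 1 \<and> \<epsilon> powr \<nu> < 1 / (2048 * T)"
    unfolding eventually_at_right[of 0 1, OF zero_less_one] by auto
  show "\<exists>\<nu> c \<epsilon>0. \<nu> > 0 \<and> c > 0 \<and> \<epsilon>0 > 0 \<and>
      (\<forall>\<epsilon>. 0 < \<epsilon> \<and> \<epsilon> < \<epsilon>0 \<longrightarrow>
        (\<forall>\<theta>\<in>{\<alpha><..<\<beta>}. \<forall>(M :: 'a measure) W X.
           standard_wiener M W \<and> sde_solution M W (drift a \<kappa> h \<theta>) x0 \<epsilon> T X \<longrightarrow>
           prob_space.prob M {\<omega>\<in>space M. (\<Squnion>t\<in>{0..T}. \<bar>X t \<omega> - x \<theta> t\<bar>) > \<epsilon> powr \<kappa>1}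
             \<le> exp (- c * \<epsilon> powr (- \<nu>))))"
  proof (intro exI conjI allI impI ballI)
    show "\<nu> > 0" by (rule \<nu>0)
    show "1 / (128 * T) > 0" using T_pos by simp
    show "\<epsilon>0 > 0" by (rule \<epsilon>0)
    fix \<epsilon> :: real and \<theta> :: real and M :: "'a measure" and W X
    assume \<epsilon>: "0 < \<epsilon> \<and> \<epsilon> < \<epsilon>0" and \<theta>: "\<theta> \<in> {\<alpha><..<\<beta>}"
      and sw_sde: "standard_wiener M W \<and> sde_solution M W (drift a \<kappa> h \<theta>) x0 \<epsilon> T X"
    have sw: "standard_wiener M W" and sde: "sde_solution M W (drift a \<kappa> h \<theta>) x0 \<epsilon> T X" using sw_sde by auto
    interpret prob_space M using sw by (simp add: standard_wiener_def)
    have e0: "0 < \<epsilon>" using \<epsilon> by simp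
    from P[OF e0] \<epsilon> have e1: "\<epsilon> < 1" and e2: "(a + H1) * \<epsilon> powr (\<gamma> * \<kappa>) < b"
      and e3: "C * \<epsilon> powr (\<gamma> * \<kappa> - \<kappa>1) < 1" and e4: "\<epsilon> powr \<nu> < 1 / (2048 * T)" by auto
    define r where "r = \<epsilon> powr (\<gamma> - 1)"
    define \<eta> where "\<eta> = \<epsilon> powr \<gamma>"
    have r0: "0 \<le> r" unfolding r_def by simp
    have er: "\<epsilon> * r = \<eta>"
    proof -
      have "\<epsilon> * r = \<epsilon> powr 1 * \<epsilon> powr (\<gamma> - 1)" using e0 by (simp add: r_def)
      also have "\<dots> = \<epsilon> powr (1 + (\<gamma> - 1))" by (rule powr_add[symmetric])
      finally show ?thesis unfolding \<eta>_def by simp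
    qed
    have \<eta>0: "0 \<le> \<eta>" unfolding \<eta>_def by simp
    have \<eta>1: "\<eta> \<le> 1" unfolding \<eta>_def using e0 e1 \<gamma>1 by (intro powr_le1) auto
    have \<eta>k: "\<eta> powr \<kappa> = \<epsilon> powr (\<gamma> * \<kappa>)" unfolding \<eta>_def by (simp add: powr_powr)
    have r2: "r^2 = \<epsilon> powr (-\<nu>)"
      unfolding r_def \<nu>_def by (simp add: power2_eq_square powr_add[symmetric])
    have Kc: "r^2 / (64*T) \<ge> 32"
    proof -
      have pos: "\<epsilon> powr \<nu> > 0" using e0 by simp
      have "2048 * T \<le> 1 / \<epsilon> powr \<nu>" using e4 pos T_pos by (simp add: field_simps)
      then have "2048 * T \<le> r^2" unfolding r2 by (simp add: powr_minus_divide)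
      then show ?thesis using T_pos by (simp add: field_simps)
    qed
    define G where "G = (\<lambda>n::nat. {\<omega>\<in>space M. \<exists>k<(2::nat)^n. r * ((1/4) * (3/4)^n) < \<bar>W (real (Suc k) * T / 2^n) \<omega> - W (real k * T / 2^n) \<omega>\<bar>})"
    have Gm: "(\<Union>n. G n) \<in> sets M"
      unfolding G_def by (rule wiener_chain_prob(1)[OF sw T_pos r0 Kc])
    have PG: "measure M (\<Union>n. G n) \<le> 2 * sqrt 2 * exp (-(r^2 / (64*T)))"
      unfolding G_def by (rule wiener_chain_prob(2)[OF sw T_pos r0 Kc])
    define E where "E = {\<omega>\<in>space M. (\<Squnion>t\<in>{0..T}. \<bar>X t \<omega> - x \<theta> t\<bar>) > \<epsilon> powr \<kappa>1}"
    have sub: "E \<subseteq> (\<Union>n. G n)"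
    proof
      fix \<omega> assume \<omega>E: "\<omega> \<in> E"
      then have \<omega>: "\<omega> \<in> space M" unfolding E_def by simp
      show "\<omega> \<in> (\<Union>n. G n)"
      proof (rule ccontr)
        assume nG: "\<omega> \<notin> (\<Union>n. G n)"
        have inc: "\<bar>W (real (Suc k) * T / 2^n) \<omega> - W (real k * T / 2^n) \<omega>\<bar> \<le> r * ((1/4) * (3/4)^n)"
          if "k < 2^n" for n k :: nat
        proof -
          have "\<omega> \<notin> G n" using nG by auto
          then have "\<not> (r * ((1/4) * (3/4)^n) < \<bar>W (real (Suc k) * T / 2^n) \<omega> - W (real k * T / 2^n) \<omega>\<bar>)"
            using \<omega> that unfolding G_def by blast
          then show ?thesis by simp
        qed
        have Wc: "continuous_on {0..T} (\<lambda>t. W t \<omega>)"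
          using sw \<omega> unfolding standard_wiener_def by (auto intro: continuous_on_subset)
        have W0: "W 0 \<omega> = 0" using sw \<omega> unfolding standard_wiener_def by auto
        have Wb: "\<bar>W t \<omega>\<bar> \<le> r" if "t \<in> {0..T}" for t
          by (rule chain_bound[OF T_pos Wc W0 r0 inc that])
        have Xc: "continuous_on {0..T} (\<lambda>t. X t \<omega>)" and
          Xeq: "\<And>t. t \<in> {0..T} \<Longrightarrow> X t \<omega> = x0 + integral {0..t} (\<lambda>s. drift a \<kappa> h \<theta> (X s \<omega>)) + \<epsilon> * W t \<omega>"
          using sde \<omega> unfolding sde_solution_def by auto
        have xo: "x \<theta> 0 = x0" and xd: "\<And>t. t \<in> {0..T} \<Longrightarrow> (x \<theta> has_real_derivative drift a \<kappa> h \<theta> (x \<theta> t)) (at t within {0..T})"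
          using x_ode[OF \<theta>] by auto
        have Sb: "b \<le> drift a \<kappa> h \<theta> y" for y
          unfolding drift_def using a_pos h_lower[of y] by (simp add: add_nonneg_pos add_increasing)
        have Smax_bd: "drift a \<kappa> h \<theta> z \<le> Smax" if "z \<in> {x0..x0+R}" for z
        proof -
          have "\<bar>z - \<theta>\<bar> \<le> D + R" using that \<theta> alpha unfolding D_def by auto
          then have "\<bar>z - \<theta>\<bar> powr \<kappa> \<le> (D + R) powr \<kappa>" by (intro powr_mono2) (use kappa in auto)
          then show ?thesis unfolding drift_def Smax_def using a_pos H0[of z]
            by (smt (verit) mult_left_mono)
        qed
        have RS: "R > 2*T*Smax" using R unfolding Smax_def .
        have Lip: "\<bar>drift a \<kappa> h \<theta> u - drift a \<kappa> h \<theta> v\<bar> \<le> (a + H1) * \<eta> powr \<kappa>" if "\<bar>u - v\<bar> \<le> \<eta>" for u v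
          by (rule drift_lip[OF h_deriv h'_bdd a_pos kappa(1) _ \<eta>0 \<eta>1 that]) (use kappa in simp)
        have Lcb: "(a + H1) * \<eta> powr \<kappa> \<le> b" using e2 \<eta>k by simp
        have gb: "\<bar>\<epsilon> * W t \<omega>\<bar> \<le> \<eta>" if "t \<in> {0..T}" for t
        proof -
          have "\<bar>\<epsilon> * W t \<omega>\<bar> = \<epsilon> * \<bar>W t \<omega>\<bar>" using e0 by (simp add: abs_mult)
          also have "\<dots> \<le> \<epsilon> * r" using Wb[OF that] e0 by (intro mult_left_mono) auto
          finally show ?thesis using er by simp
        qed
        have bound: "\<bar>X t \<omega> - x \<theta> t\<bar> \<le> \<epsilon> powr \<kappa>1" if t: "t \<in> {0..T}" for t
        proof -
          have "\<bar>X t \<omega> - x \<theta> t\<bar> \<le> \<eta> + Smax * T * ((a + H1) * \<eta> powr \<kappa>) / b"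
            by (rule pathwise[where S="drift a \<kappa> h \<theta>" and X="\<lambda>t. X t \<omega>" and g="\<lambda>t. \<epsilon> * W t \<omega>",
                  OF T_pos drift_cont[OF h_deriv kappa(1)] Sb b_pos Smax_bd RS R0 Lip Lcb Xc Xeq gb xo xd t])
          also have "\<dots> \<le> C * \<epsilon> powr (\<gamma> * \<kappa>)"
          proof -
            have "\<eta> \<le> \<eta> powr \<kappa>"
            proof (cases "\<eta> = 0")
              case False
              have "\<eta> powr 1 \<le> \<eta> powr \<kappa>" by (rule powr_mono') (use \<eta>0 \<eta>1 kappa in auto)
              then show ?thesis using \<eta>0 by (simp add: powr_one)
            qed simp
            then show ?thesis unfolding C_def \<eta>k[symmetric] by (simp add: algebra_simps)
          qed
          also have "\<dots> = (C * \<epsilon> powr (\<gamma> * \<kappa> - \<kappa>1)) * \<epsilon> powr \<kappa>1"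
            by (simp add: powr_add[symmetric])
          also have "\<dots> \<le> 1 * \<epsilon> powr \<kappa>1" using e3 by (intro mult_right_mono) auto
          finally show ?thesis by simp
        qed
        have "(\<Squnion>t\<in>{0..T}. \<bar>X t \<omega> - x \<theta> t\<bar>) \<le> \<epsilon> powr \<kappa>1"
          by (rule cSup_least) (use T_pos bound in auto)
        then show False using \<omega>E unfolding E_def by simp
      qed
    qed
    have "measure M E \<le> measure M (\<Union>n. G n)"
    proof (cases "E \<in> sets M")
      case True then show ?thesis using sub Gm by (intro finite_measure_mono) auto
    next
      case False then show ?thesis by (simp add: measure_notin_sets)
    qed
    also have "\<dots> \<le> 2 * sqrt 2 * exp (-(r^2 / (64*T)))" by (rule PG)
    also have "\<dots> \<le> exp (-((r^2 / (64*T))/2))" by (rule final_exp[OF Kc])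
    also have "\<dots> = exp (- (1 / (128 * T)) * \<epsilon> powr (- \<nu>))" unfolding r2 by simp
    finally show "prob {\<omega>\<in>space M. (\<Squnion>t\<in>{0..T}. \<bar>X t \<omega> - x \<theta> t\<bar>) > \<epsilon> powr \<kappa>1}
             \<le> exp (- (1 / (128 * T)) * \<epsilon> powr (- \<nu>))" unfolding E_def .
  qed
qed

end
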